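(* Let $T = F \cup R$ be a ground ProbLog program (with the conventions in the context) and let $(AAF^T, PS^T, \Vdash^T)$ be the PAA framework corresponding to $T$, where $AAF^T=(Args^T,Att^T)$ is finite and $PS^T=(\mathcal{W}^T,P)$. Then for every ground atom $q$: \begin{enumerate} \item $P_s(q\mid T) = Prob_G(q)$; \item $P_s(q\mid T) \le \sum_{\alpha \in Args^T,\ \alpha \text{ has claim } q} Prob_G(\alpha)$. \end{enumerate}
   Context: \textbf{Logic programs.} A (ground) logic program (LP) is a set of rules $l_0 \leftarrow l_1,\dots,l_m$ ($m\ge 0$), where $l_0$ is a ground atom (the head) and each $l_i$ ($i\ge1$) is a ground atom or a negation-as-failure literal $not\,a$ for a ground atom $a$; if $m=0$ the rule is a fact. For an LP $L$ and ground atom $q$, $L\models q$ means that $q$ is true in the (possibly three-valued) well-founded model of $L$. \textbf{ProbLog.} A ground ProbLog program is $T=F\cup R$ where $R$ is a ground LP and $F$ is a finite set of probabilistic facts $p::l\leftarrow$ with $p\in[0,1]$ and $l$ a ground atom that is not the head of any rule in $R$; each atom $l$ occurs in at most one probabilistic fact. For $F'\subseteq\{l\leftarrow \mid p::l\leftarrow\in F\}$ and $L=F'\cup R$, set $P(L\mid T)=\prod_{l\leftarrow\in F',\,p::l\leftarrow\in F} p\cdot\prod_{l\leftarrow\notin F',\,p::l\leftarrow\in F}(1-p)$. The success probability of a ground atom $q$ is $P_s(q\mid T)=\sum_{L=F'\cup R,\ F'\subseteq\{l\leftarrow\mid p::l\leftarrow\in F\},\ L\models q} P(L\mid T)$. \textbf{Abstract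 argumentation.} An AA framework is a pair $(Args,Att)$ with $Att\subseteq Args\times Args$; $G(\cdot)$ denotes its grounded extension (Dung's semantics). \textbf{ABA.} A flat ABA framework is $\langle\mathcal{L},\mathcal{R},\mathcal{A},\overline{\cdot}\rangle$ with language $\mathcal{L}$, set $\mathcal{R}$ of rules $s_0\leftarrow s_1,\dots,s_m$ ($s_i\in\mathcal{L}$), nonempty assumptions $\mathcal{A}\subseteq\mathcal{L}$ none of which is the head of a rule, and a total contrary map $\overline{\cdot}:\mathcal{A}\to\mathcal{L}$. An argument for claim $s\in\mathcal{L}$ supported by $A\subseteq\mathcal{A}$ and $\mathcal{S}\subseteq\mathcal{R}$, written $A\vdash^{\mathcal{S}} s$, is a finite tree with root labelled $s$, leaves labelled $true$ or by assumptions in $A$, each non-leaf node $s'$ having as children the body elements of one rule in $\mathcal{S}$ with head $s'$ (a single child $true$ if the body is empty), and $\mathcal{S}$ the set of rules so used. Argument $A_1\vdash^{\mathcal{S}_1}s_1$ attacks $A_2\vdash^{\mathcal{S}_2}s_2$ iff $s_1=\overline{a}$ for some $a\in A_2$. The AA framework for the ABA framework is $(Args,Att)$ with all arguments and these attacks. \textbf{ProbLog-ABA.} For $T=F\cup R$, let $HB$ be the set of ground atoms occurring in $T$, $HB^{not}=\{not\,p\mid p\in HB\}$, $\chi$ a fresh symbol, and $\mathcal{F}=\{l\mid (p::l\leftarrow)\in F\}$. The ProbLog-ABA framework corresponding to $T$ has $\mathcal{R}=R$, $\mathcal{L}=HB\cup HB^{not}\cup\{\chi\}$, $\mathcal{A}=HB^{not}\cup\mathcal{F}$,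 $\overline{not\,p}=p$, and $\overline{\phi}=\chi$ for $\phi\in\mathcal{F}$. Let $AAF^T=(Args^T,Att^T)$ be its AA framework. \textbf{PAA framework corresponding to $T$.} It is $(AAF^T,PS^T,\Vdash^T)$ where $\mathcal{W}^T=2^{\mathcal{F}}$, $P(w)=\prod_{l\in w,\,p::l\leftarrow\in F}p\cdot\prod_{l\in\mathcal{F}\setminus w,\,p::l\leftarrow\in F}(1-p)$, and for $\alpha=A\vdash^{\mathcal{S}}s\in Args^T$, $w\Vdash^T\alpha$ iff $A\cap\mathcal{F}\subseteq w$. For $w\in\mathcal{W}^T$, $AAF^T_w=(Args_w,Att_w)$ with $Args_w=\{\alpha\in Args^T\mid w\Vdash^T\alpha\}$ and $Att_w=Att^T\cap(Args_w\times Args_w)$. The grounded probability of an argument is $Prob_G(\alpha)=\sum_{w\in\mathcal{W}^T:\ \alpha\in G(AAF^T_w)}P(w)$, and the grounded probability of a ground query $q$ is $Prob_G(q)=\sum_{w\in\mathcal{W}^T:\ \exists\alpha\in G(AAF^T_w)\text{ with claim }q}P(w)$. *)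

theory Defs
  imports Complex_Main "HOL-Library.Product_Order"
begin

text \<open>Literals of ground logic programs: an atom or a negation-as-failure literal.\<close>
datatype 'a lit = Pos 'a | Neg 'a

text \<open>A ground rule  h <- l1,...,lm  is a pair (h, [l1,...,lm]); a fact has empty body.\<close>
type_synonym 'a rule = "'a \<times> 'a lit list"

fun lit_atom :: "'a lit \<Rightarrow> 'a" where
  "lit_atom (Pos a) = a" | "lit_atom (Neg a) = a"

text \<open>Partial interpretations (T, F): sets of atoms true and false.\<close>
fun lit_true :: "'a set \<times> 'a set \<Rightarrow> 'a lit \<Rightarrow> bool" where
  "lit_true I (Pos b) = (b \<in> fst I)"
| "lit_true I (Neg b) = (b \<in> snd I)"

fun lit_false :: "'a set \<times> 'a set \<Rightarrow> 'a lit \<Rightarrow> bool" where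
  "lit_false I (Pos b) = (b \<in> snd I)"
| "lit_false I (Neg b) = (b \<in> fst I)"

definition unfounded :: "'a rule set \<Rightarrow> 'a set \<times> 'a set \<Rightarrow> 'a set \<Rightarrow> bool" where
  "unfounded P I U \<longleftrightarrow>
     (\<forall>a\<in>U. \<forall>(h, body)\<in>P. h = a \<longrightarrow>
        (\<exists>l\<in>set body. lit_false I l \<or> (\<exists>b. l = Pos b \<and> b \<in> U)))"

definition greatest_unfounded :: "'a rule set \<Rightarrow> 'a set \<times> 'a set \<Rightarrow> 'a set" where
  "greatest_unfounded P I = \<Union>{U. unfounded P I U}"

definition T_op :: "'a rule set \<Rightarrow> 'a set \<times> 'a set \<Rightarrow> 'a set" where
  "T_op P I = {h. \<exists>body. (h, body) \<in> P \<and> (\<forall>l\<in>set body. lit_true I l)}"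

definition W_op :: "'a rule set \<Rightarrow> 'a set \<times> 'a set \<Rightarrow> 'a set \<times> 'a set" where
  "W_op P I = (T_op P I, greatest_unfounded P I)"

definition wf_model :: "'a rule set \<Rightarrow> 'a set \<times> 'a set" where
  "wf_model P = lfp (W_op P)"

definition lp_entails :: "'a rule set \<Rightarrow> 'a \<Rightarrow> bool" where
  "lp_entails P q \<longleftrightarrow> q \<in> fst (wf_model P)"

text \<open>A ground ProbLog program T = F \<union> R is given by the LP R, the set Fa of atoms
  of probabilistic facts and the probability p l of the fact  p l :: l <- .
  (Using a function makes each atom occur in at most one probabilistic fact.)\<close>
definition problog :: "'a rule set \<Rightarrow> 'a set \<Rightarrow> ('a \<Rightarrow> real) \<Rightarrow> bool" where
  "problog R Fa p \<longleftrightarrow> finite R \<and> finite Fa \<and> (\<forall>l\<in>Fa. 0 \<le> p l \<and> p l \<le> 1)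
     \<and> (\<forall>l\<in>Fa. \<forall>(h, body)\<in>R. h \<noteq> l)"

definition facts_of :: "'a set \<Rightarrow> 'a rule set" where
  "facts_of F' = {(l, []) | l. l \<in> F'}"

text \<open>P(w) for a selection w of the probabilistic facts (= P(L|T) and the PAA P(w)).\<close>
definition world_prob :: "'a set \<Rightarrow> ('a \<Rightarrow> real) \<Rightarrow> 'a set \<Rightarrow> real" where
  "world_prob Fa p w = (\<Prod>l\<in>w. p l) * (\<Prod>l\<in>Fa - w. 1 - p l)"

definition success_prob :: "'a rule set \<Rightarrow> 'a set \<Rightarrow> ('a \<Rightarrow> real) \<Rightarrow> 'a \<Rightarrow> real" where
  "success_prob R Fa p q =
     (\<Sum>F'\<in>{F'. F' \<subseteq> Fa \<and> lp_entails (facts_of F' \<union> R) q}. world_prob Fa p F')"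

definition defended :: "'b set \<Rightarrow> ('b \<times> 'b) set \<Rightarrow> 'b set \<Rightarrow> 'b set" where
  "defended Args Att S = {a \<in> Args. \<forall>b\<in>Args. (b, a) \<in> Att \<longrightarrow> (\<exists>c\<in>S. (c, b) \<in> Att)}"

definition grounded :: "'b set \<Rightarrow> ('b \<times> 'b) set \<Rightarrow> 'b set" where
  "grounded Args Att = lfp (defended Args Att)"

text \<open>Sentences of the language HB \<union> HB^not \<union> {chi}.\<close>
datatype 'a sent = Atm 'a | NotS 'a | Chi

fun sent_of_lit :: "'a lit \<Rightarrow> 'a sent" where
  "sent_of_lit (Pos a) = Atm a" | "sent_of_lit (Neg a) = NotS a"

definition herbrand_base :: "'a rule set \<Rightarrow> 'a set \<Rightarrow> 'a set" where
  "herbrand_base R Fa = Fa \<union> {h. \<exists>body. (h, body) \<in> R}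
     \<union> {lit_atom l | l h body. (h, body) \<in> R \<and> l \<in> set body}"

definition assumptions :: "'a rule set \<Rightarrow> 'a set \<Rightarrow> 'a sent set" where
  "assumptions R Fa = NotS ` herbrand_base R Fa \<union> Atm ` Fa"

text \<open>Contrary map: contrary (not p) = p, contrary phi = chi for phi in F.\<close>
fun contrary :: "'a sent \<Rightarrow> 'a sent" where
  "contrary (NotS p) = Atm p"
| "contrary (Atm p) = Chi"
| "contrary Chi = Chi"

text \<open>Argument trees: a leaf labelled by an assumption, or a node labelled with the head
  of a rule whose children are the trees for its body elements (no children encodes
  the single child true for an empty body).\<close>
datatype 'a argtree = AsmLeaf "'a sent" | RuleNode "'a rule" "'a argtree list"

fun claim :: "'a argtree \<Rightarrow> 'a sent" where
  "claim (AsmLeaf s) = s"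
| "claim (RuleNode r ts) = Atm (fst r)"

fun asms :: "'a argtree \<Rightarrow> 'a sent set" where
  "asms (AsmLeaf s) = {s}"
| "asms (RuleNode r ts) = (\<Union>t\<in>set ts. asms t)"

fun rules_used :: "'a argtree \<Rightarrow> 'a rule set" where
  "rules_used (AsmLeaf s) = {}"
| "rules_used (RuleNode r ts) = insert r (\<Union>t\<in>set ts. rules_used t)"

fun valid_arg :: "'a rule set \<Rightarrow> 'a sent set \<Rightarrow> 'a argtree \<Rightarrow> bool" where
  "valid_arg R A (AsmLeaf s) = (s \<in> A)"
| "valid_arg R A (RuleNode r ts) =
     (r \<in> R \<and> map claim ts = map sent_of_lit (snd r) \<and> (\<forall>t\<in>set ts. valid_arg R A t))"

definition args :: "'a rule set \<Rightarrow> 'a set \<Rightarrow> 'a argtree set" where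
  "args R Fa = {t. valid_arg R (assumptions R Fa) t}"

definition attacks :: "'a rule set \<Rightarrow> 'a set \<Rightarrow> ('a argtree \<times> 'a argtree) set" where
  "attacks R Fa = {(a, b). a \<in> args R Fa \<and> b \<in> args R Fa \<and>
                          (\<exists>x\<in>asms b. claim a = contrary x)}"

definition holds_in :: "'a set \<Rightarrow> 'a set \<Rightarrow> 'a argtree \<Rightarrow> bool" where
  "holds_in Fa w \<alpha> \<longleftrightarrow> {\<phi> \<in> Fa. Atm \<phi> \<in> asms \<alpha>} \<subseteq> w"

definition args_w :: "'a rule set \<Rightarrow> 'a set \<Rightarrow> 'a set \<Rightarrow> 'a argtree set" where
  "args_w R Fa w = {\<alpha> \<in> args R Fa. holds_in Fa w \<alpha>}"

definition att_w :: "'a rule set \<Rightarrow> 'a set \<Rightarrow> 'a set \<Rightarrow> ('a argtree \<times> 'a argtree) set" where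
  "att_w R Fa w = attacks R Fa \<inter> (args_w R Fa w \<times> args_w R Fa w)"

definition probG_arg :: "'a rule set \<Rightarrow> 'a set \<Rightarrow> ('a \<Rightarrow> real) \<Rightarrow> 'a argtree \<Rightarrow> real" where
  "probG_arg R Fa p \<alpha> =
     (\<Sum>w\<in>{w. w \<subseteq> Fa \<and> \<alpha> \<in> grounded (args_w R Fa w) (att_w R Fa w)}. world_prob Fa p w)"

definition probG_query :: "'a rule set \<Rightarrow> 'a set \<Rightarrow> ('a \<Rightarrow> real) \<Rightarrow> 'a \<Rightarrow> real" where
  "probG_query R Fa p q =
     (\<Sum>w\<in>{w. w \<subseteq> Fa \<and> (\<exists>\<alpha>\<in>grounded (args_w R Fa w) (att_w R Fa w). claim \<alpha> = Atm q)}.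
        world_prob Fa p w)"

end

theory Submission
  imports Defs
begin

lemma lit_true_mono: "fst I \<subseteq> fst J \<Longrightarrow> snd I \<subseteq> snd J \<Longrightarrow> lit_true I l \<Longrightarrow> lit_true J l"
  by (cases l) auto

lemma lit_false_mono: "fst I \<subseteq> fst J \<Longrightarrow> snd I \<subseteq> snd J \<Longrightarrow> lit_false I l \<Longrightarrow> lit_false J l"
  by (cases l) auto

lemma mono_W: "mono (W_op P)"
proof (rule monoI)
  fix I J :: "'a set \<times> 'a set" assume "I \<le> J"
  then have a: "fst I \<subseteq> fst J" "snd I \<subseteq> snd J" by (auto simp: less_eq_prod_def)
  have "T_op P I \<subseteq> T_op P J"
    unfolding T_op_def using lit_true_mono[OF a] by blast
  moreover have "greatest_unfounded P I \<subseteq> greatest_unfounded P J"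
  proof
    fix x assume "x \<in> greatest_unfounded P I"
    then obtain U where U: "unfounded P I U" "x \<in> U" unfolding greatest_unfounded_def by blast
    have "unfounded P J U" using U(1) lit_false_mono[OF a] unfolding unfounded_def by fast
    then show "x \<in> greatest_unfounded P J" using U(2) unfolding greatest_unfounded_def by blast
  qed
  ultimately show "W_op P I \<le> W_op P J" by (simp add: W_op_def less_eq_prod_def)
qed

lemma wf_fix: "wf_model P = W_op P (wf_model P)"
  unfolding wf_model_def using lfp_unfold[OF mono_W] .

lemma wf_fst: "fst (wf_model P) = T_op P (wf_model P)"
  using wf_fix[of P] by (metis W_op_def fst_conv)

lemma wf_snd: "snd (wf_model P) = greatest_unfounded P (wf_model P)"
  using wf_fix[of P] by (metis W_op_def snd_conv)

lemma mono_def': "mono (defended A Att)"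
  unfolding mono_def defended_def by blast

lemma G_fix: "grounded A Att = defended A Att (grounded A Att)"
  unfolding grounded_def using lfp_unfold[OF mono_def'] .

lemma G_sub: "grounded A Att \<subseteq> A"
  unfolding grounded_def by (rule lfp_lowerbound) (auto simp: defended_def)

lemma claim_not_chi: "valid_arg R A t \<Longrightarrow> Chi \<notin> A \<Longrightarrow> claim t \<noteq> Chi"
  by (cases t) auto

lemma claim_NotS: "claim t = NotS c \<Longrightarrow> t = AsmLeaf (NotS c)"
  by (cases t) auto

lemma chi_not_asm: "Chi \<notin> assumptions R Fa"
  unfolding assumptions_def by auto

lemma map_eq_ex: "map f xs = map g ys \<Longrightarrow> y \<in> set ys \<Longrightarrow> \<exists>x\<in>set xs. f x = g y"
  by (metis (no_types, lifting) image_iff list.set_map)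

lemma choose_list:
  "\<forall>l\<in>set xs. \<exists>t. Q t \<and> claim t = sent_of_lit l \<Longrightarrow>
   \<exists>ts. map claim ts = map sent_of_lit xs \<and> (\<forall>t\<in>set ts. Q t)"
proof (induction xs)
  case Nil then show ?case by simp
next
  case (Cons a xs)
  have "\<exists>t. Q t \<and> claim t = sent_of_lit a" using Cons.prems by simp
  then obtain t where t: "Q t" "claim t = sent_of_lit a" by blast
  have "\<forall>l\<in>set xs. \<exists>t. Q t \<and> claim t = sent_of_lit l" using Cons.prems by simp
  then obtain ts where ts: "map claim ts = map sent_of_lit xs" "\<forall>t\<in>set ts. Q t"
    using Cons.IH by blast
  have "map claim (t # ts) = map sent_of_lit (a # xs) \<and> (\<forall>u\<in>set (t # ts). Q u)"
    using t ts by simp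
  then show ?case by blast
qed

lemma args_w_iff: "\<alpha> \<in> args_w R Fa w \<longleftrightarrow> valid_arg R (assumptions R Fa) \<alpha> \<and> holds_in Fa w \<alpha>"
  unfolding args_w_def args_def by auto

lemma att_w_iff: "(\<gamma>, \<beta>) \<in> att_w R Fa w \<longleftrightarrow>
   \<gamma> \<in> args_w R Fa w \<and> \<beta> \<in> args_w R Fa w \<and> (\<exists>x\<in>asms \<beta>. claim \<gamma> = contrary x)"
  unfolding att_w_def attacks_def args_w_def by auto

lemma asms_child: "t \<in> set ts \<Longrightarrow> asms t \<subseteq> asms (RuleNode r ts)"
  by auto

lemma child_args_w:
  assumes "RuleNode r ts \<in> args_w R Fa w" "t \<in> set ts"
  shows "t \<in> args_w R Fa w"
proof -
  have v: "valid_arg R (assumptions R Fa) (RuleNode r ts)" "holds_in Fa w (RuleNode r ts)"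
    using assms(1) by (simp_all add: args_w_iff)
  then have "valid_arg R (assumptions R Fa) t" using assms(2) by simp
  moreover have "holds_in Fa w t"
    using v(2) asms_child[OF assms(2), of r] unfolding holds_in_def by blast
  ultimately show ?thesis by (simp add: args_w_iff)
qed

lemma child_att:
  assumes "(\<gamma>, t) \<in> att_w R Fa w" "RuleNode r ts \<in> args_w R Fa w" "t \<in> set ts"
  shows "(\<gamma>, RuleNode r ts) \<in> att_w R Fa w"
proof -
  obtain x where "x \<in> asms t" "claim \<gamma> = contrary x" "\<gamma> \<in> args_w R Fa w"
    using assms(1) unfolding att_w_iff by blast
  moreover have "x \<in> asms (RuleNode r ts)" using asms_child[OF assms(3)] calculation(1) by blast
  ultimately show ?thesis using assms(2) unfolding att_w_iff by blast
qed

lemma no_chi_claim: "\<gamma> \<in> args_w R Fa w \<Longrightarrow> claim \<gamma> \<noteq> Chi"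
  by (cases \<gamma>) (auto simp: args_w_iff assumptions_def)

lemma leaf_Atm_args_w: "b \<in> w \<Longrightarrow> w \<subseteq> Fa \<Longrightarrow> AsmLeaf (Atm b) \<in> args_w R Fa w"
  unfolding args_w_iff holds_in_def assumptions_def by auto

lemma leaf_NotS_args_w: "(h, body) \<in> R \<Longrightarrow> Neg c \<in> set body \<Longrightarrow> AsmLeaf (NotS c) \<in> args_w R Fa w"
proof -
  assume a: "(h, body) \<in> R" "Neg c \<in> set body"
  have "lit_atom (Neg c) \<in> {lit_atom l | l h body. (h, body) \<in> R \<and> l \<in> set body}"
    using a by blast
  then have "c \<in> herbrand_base R Fa" unfolding herbrand_base_def by simp
  then have "NotS c \<in> assumptions R Fa" unfolding assumptions_def by blast
  then show ?thesis unfolding args_w_iff holds_in_def by simp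
qed

lemma leaf_Atm_inv: "AsmLeaf (Atm b) \<in> args_w R Fa w \<Longrightarrow> b \<in> w"
  unfolding args_w_iff holds_in_def assumptions_def by auto

lemma facts_in: "(h, body) \<in> facts_of w \<longleftrightarrow> h \<in> w \<and> body = []"
  unfolding facts_of_def by auto

lemma sound:
  fixes R :: "'a rule set" and Fa w :: "'a set" and M
  defines "M \<equiv> wf_model (facts_of w \<union> R)"
  shows "valid_arg R (assumptions R Fa) \<alpha> \<Longrightarrow> holds_in Fa w \<alpha> \<Longrightarrow>
    (\<forall>b. NotS b \<in> asms \<alpha> \<longrightarrow> b \<in> snd M) \<Longrightarrow> claim \<alpha> = Atm q \<Longrightarrow> q \<in> fst M"
proof (induction \<alpha> arbitrary: q)
  case (AsmLeaf s)
  then have s: "s = Atm q" by simp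
  then have "q \<in> Fa" using AsmLeaf.prems(1) by (auto simp: assumptions_def)
  then have "q \<in> w" using AsmLeaf.prems(2) s by (auto simp: holds_in_def)
  then have "(q, []) \<in> facts_of w \<union> R" by (simp add: facts_in)
  then have "q \<in> T_op (facts_of w \<union> R) M" unfolding T_op_def by auto
  then show ?case using wf_fst unfolding M_def by metis
next
  case (RuleNode r ts)
  have r: "r \<in> R" and mc: "map claim ts = map sent_of_lit (snd r)"
    and vts: "\<forall>t\<in>set ts. valid_arg R (assumptions R Fa) t"
    using RuleNode.prems(1) by simp_all
  have q: "q = fst r" using RuleNode.prems(4) by simp
  have "lit_true M l" if l: "l \<in> set (snd r)" for l
  proof -
    obtain t where t: "t \<in> set ts" "claim t = sent_of_lit l" using map_eq_ex[OF mc l] by blast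
    have sub: "asms t \<subseteq> asms (RuleNode r ts)" using asms_child[OF t(1)] .
    show ?thesis
    proof (cases l)
      case (Pos c)
      have "holds_in Fa w t" using RuleNode.prems(2) sub unfolding holds_in_def by blast
      moreover have "\<forall>b. NotS b \<in> asms t \<longrightarrow> b \<in> snd M" using RuleNode.prems(3) sub by blast
      ultimately have "c \<in> fst M"
        using RuleNode.IH[OF t(1)] vts t Pos by simp
      then show ?thesis using Pos by simp
    next
      case (Neg c)
      then have "t = AsmLeaf (NotS c)" using t(2) claim_NotS by simp
      then have "NotS c \<in> asms (RuleNode r ts)" using sub by simp
      then show ?thesis using RuleNode.prems(3) Neg by simp
    qed
  qed
  then have "fst r \<in> T_op (facts_of w \<union> R) M" unfolding T_op_def using r
    by (intro CollectI exI[of _ "snd r"]) simp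
  then show ?case using wf_fst q unfolding M_def by metis
qed

definition SS :: "'a rule set \<Rightarrow> 'a set \<Rightarrow> 'a set \<Rightarrow> 'a argtree set" where
  "SS R Fa w = {\<alpha> \<in> args_w R Fa w. \<forall>b. NotS b \<in> asms \<alpha> \<longrightarrow> b \<in> snd (wf_model (facts_of w \<union> R))}"

lemma sound': "\<alpha> \<in> SS R Fa w \<Longrightarrow> claim \<alpha> = Atm q \<Longrightarrow> q \<in> fst (wf_model (facts_of w \<union> R))"
proof -
  assume a: "\<alpha> \<in> SS R Fa w" "claim \<alpha> = Atm q"
  have "valid_arg R (assumptions R Fa) \<alpha>" "holds_in Fa w \<alpha>"
    "\<forall>b. NotS b \<in> asms \<alpha> \<longrightarrow> b \<in> snd (wf_model (facts_of w \<union> R))"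
    using a(1) unfolding SS_def args_w_iff by auto
  then show ?thesis using sound[of R Fa \<alpha> w q] a(2) by blast
qed

lemma node_args_w:
  assumes "r \<in> R" "map claim ts = map sent_of_lit (snd r)" "\<forall>t\<in>set ts. t \<in> args_w R Fa w"
  shows "RuleNode r ts \<in> args_w R Fa w"
proof -
  have "valid_arg R (assumptions R Fa) (RuleNode r ts)" using assms unfolding args_w_iff by simp
  moreover have "holds_in Fa w (RuleNode r ts)" unfolding holds_in_def
  proof
    fix x assume "x \<in> {\<phi> \<in> Fa. Atm \<phi> \<in> asms (RuleNode r ts)}"
    then obtain t where t: "t \<in> set ts" "Atm x \<in> asms t" "x \<in> Fa" by auto
    then have "holds_in Fa w t" using assms(3) unfolding args_w_iff by blast
    then show "x \<in> w" using t unfolding holds_in_def by blast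
  qed
  ultimately show ?thesis by (simp add: args_w_iff)
qed

lemma U_unf:
  fixes R :: "'a rule set" and Fa w :: "'a set"
  assumes wF: "w \<subseteq> Fa"
  defines "U \<equiv> {b. \<forall>\<beta>\<in>args_w R Fa w. claim \<beta> = Atm b \<longrightarrow> (\<exists>\<gamma>\<in>SS R Fa w. (\<gamma>, \<beta>) \<in> att_w R Fa w)}"
  shows "unfounded (facts_of w \<union> R) (wf_model (facts_of w \<union> R)) U"
  unfolding unfounded_def
proof (intro ballI, clarify)
  fix a h body
  assume aU: "a \<in> U" and hb: "(a, body) \<in> facts_of w \<union> R"
  let ?M = "wf_model (facts_of w \<union> R)"
  show "\<exists>l\<in>set body. lit_false ?M l \<or> (\<exists>b. l = Pos b \<and> b \<in> U)"
  proof (rule ccontr)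
    assume nc: "\<not> (\<exists>l\<in>set body. lit_false ?M l \<or> (\<exists>b. l = Pos b \<and> b \<in> U))"
    have aU': "\<forall>\<beta>\<in>args_w R Fa w. claim \<beta> = Atm a \<longrightarrow> (\<exists>\<gamma>\<in>SS R Fa w. (\<gamma>, \<beta>) \<in> att_w R Fa w)"
      using aU unfolding U_def mem_Collect_eq .
    show False
    proof (cases "(a, body) \<in> facts_of w")
      case True
      then have "a \<in> w" by (simp add: facts_in)
      then have la: "AsmLeaf (Atm a) \<in> args_w R Fa w" using leaf_Atm_args_w[OF _ wF] by blast
      have "\<exists>\<gamma>\<in>SS R Fa w. (\<gamma>, AsmLeaf (Atm a)) \<in> att_w R Fa w" using aU' la by simp
      then obtain \<gamma> where "\<gamma> \<in> SS R Fa w" "(\<gamma>, AsmLeaf (Atm a)) \<in> att_w R Fa w" by blast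
      then have "claim \<gamma> = Chi" "\<gamma> \<in> args_w R Fa w" unfolding att_w_iff by simp_all
      then show False using no_chi_claim by blast
    next
      case False
      then have hR: "(a, body) \<in> R" using hb by blast
      define Q where "Q t \<longleftrightarrow> t \<in> args_w R Fa w \<and> \<not> (\<exists>\<gamma>\<in>SS R Fa w. (\<gamma>, t) \<in> att_w R Fa w)" for t
      have "\<exists>t. Q t \<and> claim t = sent_of_lit l" if l: "l \<in> set body" for l
      proof (cases l)
        case (Pos c)
        then have "c \<notin> U" using nc l by blast
        then obtain \<beta> where "\<beta> \<in> args_w R Fa w" "claim \<beta> = Atm c"
            "\<not> (\<exists>\<gamma>\<in>SS R Fa w. (\<gamma>, \<beta>) \<in> att_w R Fa w)" unfolding U_def by blast
        then show ?thesis using Pos Q_def by auto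
      next
        case (Neg c)
        then have cf: "c \<notin> fst ?M" using nc l by auto
        have la: "AsmLeaf (NotS c) \<in> args_w R Fa w" using leaf_NotS_args_w[OF hR] l Neg by blast
        have "\<not> (\<exists>\<gamma>\<in>SS R Fa w. (\<gamma>, AsmLeaf (NotS c)) \<in> att_w R Fa w)"
        proof
          assume "\<exists>\<gamma>\<in>SS R Fa w. (\<gamma>, AsmLeaf (NotS c)) \<in> att_w R Fa w"
          then obtain \<gamma> where "\<gamma> \<in> SS R Fa w" "claim \<gamma> = Atm c" unfolding att_w_iff by auto
          then show False using sound'[of \<gamma> R Fa w c] cf by blast
        qed
        then show ?thesis using la Neg Q_def by auto
      qed
      then obtain ts where ts: "map claim ts = map sent_of_lit body" "\<forall>t\<in>set ts. Q t"
        using choose_list[of body Q] by blast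
      let ?n = "RuleNode (a, body) ts"
      have "\<forall>t\<in>set ts. t \<in> args_w R Fa w" using ts(2) unfolding Q_def by blast
      then have nA: "?n \<in> args_w R Fa w" using node_args_w[of "(a, body)" R ts Fa w] hR ts(1) by simp
      then obtain \<gamma> where g: "\<gamma> \<in> SS R Fa w" "(\<gamma>, ?n) \<in> att_w R Fa w" using aU' by auto
      then obtain x where x: "x \<in> asms ?n" "claim \<gamma> = contrary x" "\<gamma> \<in> args_w R Fa w"
        unfolding att_w_iff by blast
      then obtain t where t: "t \<in> set ts" "x \<in> asms t" by auto
      then have "(\<gamma>, t) \<in> att_w R Fa w" using x ts(2) unfolding Q_def att_w_iff by blast
      then show False using g(1) t(1) ts(2) unfolding Q_def by blast
    qed
  qed
qed

lemma GS:
  assumes wF: "w \<subseteq> Fa"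
  shows "grounded (args_w R Fa w) (att_w R Fa w) \<subseteq> SS R Fa w"
  unfolding grounded_def
proof (rule lfp_induct[OF mono_def'])
  let ?G = "lfp (defended (args_w R Fa w) (att_w R Fa w))"
  let ?M = "wf_model (facts_of w \<union> R)"
  define U where "U \<equiv> {b. \<forall>\<beta>\<in>args_w R Fa w. claim \<beta> = Atm b \<longrightarrow> (\<exists>\<gamma>\<in>SS R Fa w. (\<gamma>, \<beta>) \<in> att_w R Fa w)}"
  have "U \<subseteq> greatest_unfounded (facts_of w \<union> R) ?M"
    using U_unf[OF wF] unfolding U_def greatest_unfounded_def by blast
  then have Usub: "U \<subseteq> snd ?M" using wf_snd by metis
  show "defended (args_w R Fa w) (att_w R Fa w) (inf ?G (SS R Fa w)) \<le> SS R Fa w"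
  proof
    fix \<alpha> assume a: "\<alpha> \<in> defended (args_w R Fa w) (att_w R Fa w) (inf ?G (SS R Fa w))"
    then have aA: "\<alpha> \<in> args_w R Fa w" unfolding defended_def by blast
    have "b \<in> snd ?M" if nb: "NotS b \<in> asms \<alpha>" for b
    proof -
      have "b \<in> U" unfolding U_def
      proof (intro CollectI ballI impI)
        fix \<beta> assume "\<beta> \<in> args_w R Fa w" "claim \<beta> = Atm b"
        then have "(\<beta>, \<alpha>) \<in> att_w R Fa w" using aA nb unfolding att_w_iff by force
        then obtain c where "c \<in> inf ?G (SS R Fa w)" "(c, \<beta>) \<in> att_w R Fa w"
          using a \<open>\<beta> \<in> args_w R Fa w\<close> unfolding defended_def by blast
        then show "\<exists>\<gamma>\<in>SS R Fa w. (\<gamma>, \<beta>) \<in> att_w R Fa w" by auto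
      qed
      then show ?thesis using Usub by blast
    qed
    then show "\<alpha> \<in> SS R Fa w" using aA unfolding SS_def by blast
  qed
qed

abbreviation GG :: "'a rule set \<Rightarrow> 'a set \<Rightarrow> 'a set \<Rightarrow> 'a argtree set" where
  "GG R Fa w \<equiv> grounded (args_w R Fa w) (att_w R Fa w)"

lemma GG_args: "\<gamma> \<in> GG R Fa w \<Longrightarrow> \<gamma> \<in> args_w R Fa w"
  by (rule subsetD[OF G_sub])

lemma inG:
  assumes "\<alpha> \<in> args_w R Fa w"
    "\<forall>x\<in>asms \<alpha>. \<forall>\<beta>\<in>args_w R Fa w. claim \<beta> = contrary x \<longrightarrow> (\<exists>\<gamma>\<in>GG R Fa w. (\<gamma>, \<beta>) \<in> att_w R Fa w)"
  shows "\<alpha> \<in> GG R Fa w"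
proof -
  have "\<alpha> \<in> defended (args_w R Fa w) (att_w R Fa w) (GG R Fa w)"
    unfolding defended_def
  proof (intro CollectI conjI ballI impI)
    show "\<alpha> \<in> args_w R Fa w" by fact
    fix \<beta> assume "\<beta> \<in> args_w R Fa w" "(\<beta>, \<alpha>) \<in> att_w R Fa w"
    then obtain x where "x \<in> asms \<alpha>" "claim \<beta> = contrary x" unfolding att_w_iff by blast
    then show "\<exists>c\<in>GG R Fa w. (c, \<beta>) \<in> att_w R Fa w" using assms(2) \<open>\<beta> \<in> args_w R Fa w\<close> by blast
  qed
  then show ?thesis by (subst G_fix)
qed

lemma G_counter:
  assumes "\<alpha> \<in> GG R Fa w" "(\<beta>, \<alpha>) \<in> att_w R Fa w"
  shows "\<exists>\<gamma>\<in>GG R Fa w. (\<gamma>, \<beta>) \<in> att_w R Fa w"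
proof -
  have "\<alpha> \<in> defended (args_w R Fa w) (att_w R Fa w) (GG R Fa w)" using assms(1) by (subst (asm) G_fix)
  moreover have "\<beta> \<in> args_w R Fa w" using assms(2) unfolding att_w_iff by blast
  ultimately show ?thesis using assms(2) unfolding defended_def by blast
qed

definition Phi :: "'a rule set \<Rightarrow> 'a set \<Rightarrow> 'a set \<Rightarrow> 'a set \<times> 'a set \<Rightarrow> bool" where
  "Phi R Fa w I \<longleftrightarrow> (\<forall>q\<in>fst I. \<exists>\<gamma>\<in>GG R Fa w. claim \<gamma> = Atm q) \<and>
     (\<forall>b\<in>snd I. \<forall>\<beta>\<in>args_w R Fa w. claim \<beta> = Atm b \<longrightarrow> (\<exists>\<gamma>\<in>GG R Fa w. (\<gamma>, \<beta>) \<in> att_w R Fa w))"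

lemma unf_attacked:
  assumes ph: "Phi R Fa w S" and unf: "unfounded (facts_of w \<union> R) S U"
  shows "\<beta> \<in> args_w R Fa w \<Longrightarrow> claim \<beta> = Atm b \<Longrightarrow> b \<in> U \<Longrightarrow> \<exists>\<gamma>\<in>GG R Fa w. (\<gamma>, \<beta>) \<in> att_w R Fa w"
proof (induction \<beta> arbitrary: b)
  case (AsmLeaf s)
  then have s: "s = Atm b" by simp
  then have "AsmLeaf (Atm b) \<in> args_w R Fa w" using AsmLeaf.prems(1) by simp
  then have "b \<in> w" by (rule leaf_Atm_inv)
  then have bf: "(b, []) \<in> facts_of w \<union> R" by (simp add: facts_in)
  have "\<forall>(h, body)\<in>facts_of w \<union> R. h = b \<longrightarrow>
        (\<exists>l\<in>set body. lit_false S l \<or> (\<exists>c. l = Pos c \<and> c \<in> U))"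
    using unf AsmLeaf.prems(3) unfolding unfounded_def by blast
  then have "\<exists>l\<in>set []. lit_false S l \<or> (\<exists>c. l = Pos c \<and> c \<in> U)" using bf by fast
  then have False by simp
  then show ?case ..
next
  case (RuleNode r ts)
  obtain h body where r: "r = (h, body)" by (cases r)
  have hb: "h = b" using RuleNode.prems(2) r by simp
  have rR: "r \<in> R" and mc: "map claim ts = map sent_of_lit body"
    using RuleNode.prems(1) r unfolding args_w_iff by simp_all
  have "\<exists>l\<in>set body. lit_false S l \<or> (\<exists>c. l = Pos c \<and> c \<in> U)"
    using unf RuleNode.prems(3) rR r hb unfolding unfounded_def by blast
  then obtain l where l: "l \<in> set body" "lit_false S l \<or> (\<exists>c. l = Pos c \<and> c \<in> U)" by blast
  obtain t where t: "t \<in> set ts" "claim t = sent_of_lit l" using map_eq_ex[OF mc l(1)] by blast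
  have tA: "t \<in> args_w R Fa w" using child_args_w[OF RuleNode.prems(1) t(1)] .
  show ?case
  proof (cases l)
    case (Pos c)
    have tc: "claim t = Atm c" using t(2) Pos by simp
    have "\<exists>\<gamma>\<in>GG R Fa w. (\<gamma>, t) \<in> att_w R Fa w"
    proof (cases "c \<in> U")
      case True
      then show ?thesis using RuleNode.IH[OF t(1) tA tc] by blast
    next
      case False
      then have "c \<in> snd S" using l(2) Pos by simp
      then show ?thesis using ph tA tc unfolding Phi_def by blast
    qed
    then show ?thesis using child_att[OF _ RuleNode.prems(1) t(1)] by blast
  next
    case (Neg c)
    then have "c \<in> fst S" using l(2) by simp
    then obtain \<gamma> where g: "\<gamma> \<in> GG R Fa w" "claim \<gamma> = Atm c" using ph unfolding Phi_def by blast
    have "t = AsmLeaf (NotS c)" using t(2) Neg claim_NotS by simp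
    then have "NotS c \<in> asms (RuleNode r ts)" using asms_child[OF t(1)] by auto
    then have "(\<gamma>, RuleNode r ts) \<in> att_w R Fa w"
      using g GG_args RuleNode.prems(1) unfolding att_w_iff by force
    then show ?thesis using g(1) by blast
  qed
qed

lemma Phi_step:
  assumes wF: "w \<subseteq> Fa" and ph: "Phi R Fa w S"
  shows "Phi R Fa w (W_op (facts_of w \<union> R) S)"
  unfolding Phi_def W_op_def fst_conv snd_conv
proof (intro conjI ballI impI)
  fix q assume "q \<in> T_op (facts_of w \<union> R) S"
  then obtain body where qb: "(q, body) \<in> facts_of w \<union> R" "\<forall>l\<in>set body. lit_true S l"
    unfolding T_op_def by blast
  show "\<exists>\<gamma>\<in>GG R Fa w. claim \<gamma> = Atm q"
  proof (cases "(q, body) \<in> facts_of w")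
    case True
    then have "q \<in> w" by (simp add: facts_in)
    then have la: "AsmLeaf (Atm q) \<in> args_w R Fa w" using leaf_Atm_args_w[OF _ wF] by blast
    have "AsmLeaf (Atm q) \<in> GG R Fa w"
    proof (rule inG[OF la], intro ballI impI)
      fix x \<beta> assume "x \<in> asms (AsmLeaf (Atm q))" "\<beta> \<in> args_w R Fa w" "claim \<beta> = contrary x"
      then have "claim \<beta> = Chi" by simp
      then show "\<exists>\<gamma>\<in>GG R Fa w. (\<gamma>, \<beta>) \<in> att_w R Fa w" using no_chi_claim \<open>\<beta> \<in> args_w R Fa w\<close> by blast
    qed
    then show ?thesis by (intro bexI[of _ "AsmLeaf (Atm q)"]) simp_all
  next
    case False
    then have hR: "(q, body) \<in> R" using qb(1) by blast
    have "\<exists>t. t \<in> GG R Fa w \<and> claim t = sent_of_lit l" if l: "l \<in> set body" for l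
    proof (cases l)
      case (Pos c)
      then have "c \<in> fst S" using qb(2) l by fastforce
      then show ?thesis using ph Pos unfolding Phi_def by auto
    next
      case (Neg c)
      then have cS: "c \<in> snd S" using qb(2) l by fastforce
      have la: "AsmLeaf (NotS c) \<in> args_w R Fa w" using leaf_NotS_args_w[OF hR] l Neg by blast
      have "AsmLeaf (NotS c) \<in> GG R Fa w"
      proof (rule inG[OF la], intro ballI impI)
        fix x \<beta> assume "x \<in> asms (AsmLeaf (NotS c))" "\<beta> \<in> args_w R Fa w" "claim \<beta> = contrary x"
        then have "claim \<beta> = Atm c" by simp
        then show "\<exists>\<gamma>\<in>GG R Fa w. (\<gamma>, \<beta>) \<in> att_w R Fa w"
          using ph cS \<open>\<beta> \<in> args_w R Fa w\<close> unfolding Phi_def by blast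
      qed
      then show ?thesis using Neg by auto
    qed
    then obtain ts where ts: "map claim ts = map sent_of_lit body" "\<forall>t\<in>set ts. t \<in> GG R Fa w"
      using choose_list[of body "\<lambda>t. t \<in> GG R Fa w"] by blast
    let ?n = "RuleNode (q, body) ts"
    have "\<forall>t\<in>set ts. t \<in> args_w R Fa w" using ts(2) GG_args by blast
    then have nA: "?n \<in> args_w R Fa w" using node_args_w[of "(q, body)" R ts Fa w] hR ts(1) by simp
    have "?n \<in> GG R Fa w"
    proof (rule inG[OF nA], intro ballI impI)
      fix x \<beta> assume x: "x \<in> asms ?n" "\<beta> \<in> args_w R Fa w" "claim \<beta> = contrary x"
      then obtain t where t: "t \<in> set ts" "x \<in> asms t" by auto
      then have "(\<beta>, t) \<in> att_w R Fa w" using x ts(2) GG_args unfolding att_w_iff by blast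
      then show "\<exists>\<gamma>\<in>GG R Fa w. (\<gamma>, \<beta>) \<in> att_w R Fa w" using G_counter t ts(2) by blast
    qed
    then show ?thesis by (intro bexI[of _ ?n]) simp_all
  qed
next
  fix b \<beta> assume "b \<in> greatest_unfounded (facts_of w \<union> R) S" "\<beta> \<in> args_w R Fa w" "claim \<beta> = Atm b"
  moreover obtain U where "unfounded (facts_of w \<union> R) S U" "b \<in> U"
    using calculation(1) unfolding greatest_unfounded_def by blast
  ultimately show "\<exists>\<gamma>\<in>GG R Fa w. (\<gamma>, \<beta>) \<in> att_w R Fa w"
    using unf_attacked[OF ph] by blast
qed

lemma Phi_wf:
  assumes wF: "w \<subseteq> Fa"
  shows "Phi R Fa w (wf_model (facts_of w \<union> R))"
  unfolding wf_model_def
proof (rule lfp_ordinal_induct[OF mono_W])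
  fix S assume "Phi R Fa w S"
  then show "Phi R Fa w (W_op (facts_of w \<union> R) S)" using Phi_step[OF wF] by blast
next
  fix M :: "('a set \<times> 'a set) set" assume M: "\<forall>S\<in>M. Phi R Fa w S"
  have f: "fst (Sup M) = (\<Union>S\<in>M. fst S)" by (simp add: fst_Sup)
  have s: "snd (Sup M) = (\<Union>S\<in>M. snd S)" by (simp add: snd_Sup)
  show "Phi R Fa w (Sup M)" unfolding Phi_def f s
  proof (intro conjI ballI impI)
    fix q assume "q \<in> (\<Union>S\<in>M. fst S)"
    then obtain S where "S \<in> M" "q \<in> fst S" by blast
    then show "\<exists>\<gamma>\<in>GG R Fa w. claim \<gamma> = Atm q" using M unfolding Phi_def by blast
  next
    fix b \<beta> assume "b \<in> (\<Union>S\<in>M. snd S)" "\<beta> \<in> args_w R Fa w" "claim \<beta> = Atm b"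
    moreover obtain S where "S \<in> M" "b \<in> snd S" using calculation(1) by blast
    ultimately show "\<exists>\<gamma>\<in>GG R Fa w. (\<gamma>, \<beta>) \<in> att_w R Fa w" using M unfolding Phi_def by blast
  qed
qed

lemma equiv:
  assumes wF: "w \<subseteq> Fa"
  shows "lp_entails (facts_of w \<union> R) q \<longleftrightarrow> (\<exists>\<alpha>\<in>GG R Fa w. claim \<alpha> = Atm q)"
proof
  assume "lp_entails (facts_of w \<union> R) q"
  then show "\<exists>\<alpha>\<in>GG R Fa w. claim \<alpha> = Atm q"
    using Phi_wf[OF wF, of R] unfolding lp_entails_def Phi_def by blast
next
  assume "\<exists>\<alpha>\<in>GG R Fa w. claim \<alpha> = Atm q"
  then obtain \<alpha> where "\<alpha> \<in> GG R Fa w" "claim \<alpha> = Atm q" by blast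
  then show "lp_entails (facts_of w \<union> R) q"
    using sound'[of \<alpha> R Fa w q] subsetD[OF GS[OF wF, of R]] unfolding lp_entails_def by blast
qed

lemma wp_nonneg:
  assumes "problog R Fa p" "w \<subseteq> Fa"
  shows "0 \<le> world_prob Fa p w"
proof -
  have "\<forall>l\<in>Fa. 0 \<le> p l \<and> p l \<le> 1" using assms(1) unfolding problog_def by blast
  then have "0 \<le> (\<Prod>l\<in>w. p l)" "0 \<le> (\<Prod>l\<in>Fa - w. 1 - p l)"
    using assms(2) by (auto intro!: prod_nonneg)
  then show ?thesis unfolding world_prob_def by simp
qed

lemma sum_filter_Pow:
  assumes "finite Fa"
  shows "(\<Sum>w\<in>{w. w \<subseteq> Fa \<and> Q w}. f w) = (\<Sum>w\<in>Pow Fa. if Q w then f w else 0)"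
proof -
  have "{w. w \<subseteq> Fa \<and> Q w} = {w \<in> Pow Fa. Q w}" by auto
  then show ?thesis using sum.inter_filter[of "Pow Fa" f Q] assms by simp
qed

theorem mainTheorem1:
  fixes R :: "'a rule set" and Fa :: "'a set" and p :: "'a \<Rightarrow> real" and q :: 'a
  assumes "problog R Fa p"
    and "finite (args R Fa)"
  shows "success_prob R Fa p q = probG_query R Fa p q \<and>
         success_prob R Fa p q \<le> (\<Sum>\<alpha>\<in>{\<alpha> \<in> args R Fa. claim \<alpha> = Atm q}. probG_arg R Fa p \<alpha>)"
proof -
  have fF: "finite Fa" using assms(1) unfolding problog_def by blast
  have eqset: "{F'. F' \<subseteq> Fa \<and> lp_entails (facts_of F' \<union> R) q} =
      {w. w \<subseteq> Fa \<and> (\<exists>\<alpha>\<in>GG R Fa w. claim \<alpha> = Atm q)}"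
  proof (rule Collect_cong)
    fix F' show "(F' \<subseteq> Fa \<and> lp_entails (facts_of F' \<union> R) q) =
      (F' \<subseteq> Fa \<and> (\<exists>\<alpha>\<in>GG R Fa F'. claim \<alpha> = Atm q))"
      using equiv[of F' Fa R q] by blast
  qed
  have A: "success_prob R Fa p q = probG_query R Fa p q"
    unfolding success_prob_def probG_query_def eqset ..
  define As where "As = {\<alpha> \<in> args R Fa. claim \<alpha> = Atm q}"
  have fA: "finite As" using assms(2) unfolding As_def by (rule finite_subset[rotated]) blast
  let ?wp = "world_prob Fa p"
  have "probG_query R Fa p q =
      (\<Sum>w\<in>Pow Fa. if \<exists>\<alpha>\<in>GG R Fa w. claim \<alpha> = Atm q then ?wp w else 0)"
    unfolding probG_query_def by (rule sum_filter_Pow[OF fF])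
  also have "\<dots> \<le> (\<Sum>w\<in>Pow Fa. \<Sum>\<alpha>\<in>As. if \<alpha> \<in> GG R Fa w then ?wp w else 0)"
  proof (rule sum_mono)
    fix w assume w: "w \<in> Pow Fa"
    then have nn: "0 \<le> ?wp w" using wp_nonneg[OF assms(1)] by blast
    have nn2: "\<forall>\<alpha>\<in>As. 0 \<le> (if \<alpha> \<in> GG R Fa w then ?wp w else 0)" using nn by simp
    show "(if \<exists>\<alpha>\<in>GG R Fa w. claim \<alpha> = Atm q then ?wp w else 0)
          \<le> (\<Sum>\<alpha>\<in>As. if \<alpha> \<in> GG R Fa w then ?wp w else 0)"
    proof (cases "\<exists>\<alpha>\<in>GG R Fa w. claim \<alpha> = Atm q")
      case True
      then obtain \<alpha> where a: "\<alpha> \<in> GG R Fa w" "claim \<alpha> = Atm q" by blast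
      have "\<alpha> \<in> args_w R Fa w" using a(1) by (rule GG_args)
      then have "\<alpha> \<in> As" using a(2) unfolding As_def args_w_def by simp
      then have "(if \<alpha> \<in> GG R Fa w then ?wp w else 0) \<le> (\<Sum>\<alpha>\<in>As. if \<alpha> \<in> GG R Fa w then ?wp w else 0)"
        using member_le_sum[of \<alpha> As "\<lambda>\<alpha>. if \<alpha> \<in> GG R Fa w then ?wp w else 0"] fA nn2 by blast
      then show ?thesis using True a(1) by simp
    next
      case False
      then show ?thesis using sum_nonneg[of As "\<lambda>\<alpha>. if \<alpha> \<in> GG R Fa w then ?wp w else 0"] nn2 by simp
    qed
  qed
  also have "\<dots> = (\<Sum>\<alpha>\<in>As. \<Sum>w\<in>Pow Fa. if \<alpha> \<in> GG R Fa w then ?wp w else 0)"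
    by (rule sum.swap)
  also have "\<dots> = (\<Sum>\<alpha>\<in>As. probG_arg R Fa p \<alpha>)"
    unfolding probG_arg_def by (rule sum.cong[OF refl], rule sum_filter_Pow[OF fF, symmetric])
  finally show ?thesis using A unfolding As_def by simp
qed

end
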